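(* For a graphical sequence $\pi$ of length $n$ define $h(\pi)=g(\overline{\pi})$. Then: (i) every realization $G$ of $\pi$ satisfies $\chi(G)\ge\omega(G)\ge h(\pi)$; (ii) $h$ is monotone increasing: if $\pi\le\pi'$ termwise (both graphical of length $n$) then $h(\pi)\le h(\pi')$; (iii) there is a graphical sequence $\pi'\ge\pi$ (termwise) of length $n$ having a realization that is a complete $h(\pi)$-partite graph, so that $\omega$ and $\chi$ of this realization both equal $h(\pi)$.
   Context: Graphs are finite and simple; a graphical sequence is a nondecreasing integer sequence that is the degree sequence of some graph (a realization). For $\pi=(d_1\le\cdots\le d_n)$, $\overline{\pi}=((n-1)-d_n\le\cdots\le(n-1)-d_1)$ is the complementary sequence. For a graphical sequence $(e_1\le\cdots\le e_n)$ define $f(1)=e_1$ with index $j_1=1$; if $f(i)=e_{j_i}$ is finite and $j_i+f(i)+1\le n$ set $j_{i+1}=j_i+f(i)+1$, $f(i+1)=e_{j_{i+1}}$, otherwise $f(i+1)=\infty$; once $\infty$, it stays $\infty$. Let $g$ of that sequence be $\max\{i\in\mathbb{Z}^+: f(i)<\infty\}$. It is known (Murphy) that every realization of a graphical sequence $\sigma$ has independence number at least $g(\sigma)$. $\omega$ is clique number and $\chi$ chromatic number. *)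

theory Defs
  imports Main
begin

definition simple_graph :: "nat \<Rightarrow> (nat \<Rightarrow> nat \<Rightarrow> bool) \<Rightarrow> bool" where
  "simple_graph n E \<longleftrightarrow> (\<forall>u v. E u v \<longrightarrow> u < n \<and> v < n \<and> u \<noteq> v \<and> E v u)"

definition deg :: "nat \<Rightarrow> (nat \<Rightarrow> nat \<Rightarrow> bool) \<Rightarrow> nat \<Rightarrow> nat" where
  "deg n E v = card {u. u < n \<and> E v u}"

text \<open>E realizes the sequence pi: vertex i has degree pi!i (vertices labelled in
  the order of the sorted degree sequence).\<close>
definition realization :: "nat list \<Rightarrow> (nat \<Rightarrow> nat \<Rightarrow> bool) \<Rightarrow> bool" where
  "realization pi E \<longleftrightarrow> simple_graph (length pi) E \<and>
     (\<forall>i < length pi. deg (length pi) E i = pi ! i)"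

definition graphical :: "nat list \<Rightarrow> bool" where
  "graphical pi \<longleftrightarrow> sorted pi \<and> (\<exists>E. realization pi E)"

definition compl_seq :: "nat list \<Rightarrow> nat list" where
  "compl_seq pi = rev (map (\<lambda>d. (length pi - 1) - d) pi)"

text \<open>Murphy's greedy count: g_aux e j counts the indices j_i (0-based) visited,
  starting at j, jumping from j to j + e!j + 1 while j < length e.\<close>
function g_aux :: "nat list \<Rightarrow> nat \<Rightarrow> nat" where
  "g_aux e j = (if j < length e then Suc (g_aux e (j + e ! j + 1)) else 0)"
  by auto
termination by (relation "measure (\<lambda>(e, j). length e - j)") auto

definition g :: "nat list \<Rightarrow> nat" where
  "g e = g_aux e 0"

definition h :: "nat list \<Rightarrow> nat" where
  "h pi = g (compl_seq pi)"

definition is_clique :: "(nat \<Rightarrow> nat \<Rightarrow> bool) \<Rightarrow> nat set \<Rightarrow> bool" where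
  "is_clique E K \<longleftrightarrow> (\<forall>u\<in>K. \<forall>v\<in>K. u \<noteq> v \<longrightarrow> E u v)"

definition clique_number :: "nat \<Rightarrow> (nat \<Rightarrow> nat \<Rightarrow> bool) \<Rightarrow> nat" where
  "clique_number n E = Max {card K | K. K \<subseteq> {0..<n} \<and> is_clique E K}"

definition proper_colouring :: "nat \<Rightarrow> (nat \<Rightarrow> nat \<Rightarrow> bool) \<Rightarrow> nat \<Rightarrow> (nat \<Rightarrow> nat) \<Rightarrow> bool" where
  "proper_colouring n E k c \<longleftrightarrow> (\<forall>v < n. c v < k) \<and>
     (\<forall>u < n. \<forall>v < n. E u v \<longrightarrow> c u \<noteq> c v)"

definition chromatic_number :: "nat \<Rightarrow> (nat \<Rightarrow> nat \<Rightarrow> bool) \<Rightarrow> nat" where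
  "chromatic_number n E = (LEAST k. \<exists>c. proper_colouring n E k c)"

definition complete_multipartite :: "nat \<Rightarrow> (nat \<Rightarrow> nat \<Rightarrow> bool) \<Rightarrow> nat \<Rightarrow> bool" where
  "complete_multipartite n E k \<longleftrightarrow> (\<exists>p. (\<forall>v < n. p v < k) \<and>
     (\<forall>i < k. \<exists>v < n. p v = i) \<and>
     (\<forall>u v. E u v \<longleftrightarrow> u < n \<and> v < n \<and> p u \<noteq> p v))"

end

theory Submission
  imports Defs
begin


lemma g_aux_ge: "\<not> j < length e \<Longrightarrow> g_aux e j = 0"
  by (subst g_aux.simps) simp
lemma g_aux_lt: "j < length e \<Longrightarrow> g_aux e j = Suc (g_aux e (j + e!j + 1))"
  by (subst g_aux.simps) simp
declare g_aux.simps[simp del]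

function blocks :: "nat list \<Rightarrow> nat \<Rightarrow> nat list" where
  "blocks e j = (if j < length e then (if j + e!j + 1 < length e
     then (e!j+1) # blocks e (j + e!j + 1) else [length e - j]) else [])"
  by auto
termination by (relation "measure (\<lambda>(e, j). length e - j)") auto
declare blocks.simps[simp del]

fun valid :: "(nat \<Rightarrow> nat) \<Rightarrow> nat \<Rightarrow> nat list \<Rightarrow> bool" where
  "valid f a [] = True"
| "valid f a (x#xs) = (x \<le> f a + 1 \<and> valid f (a+x) xs)"

fun lab :: "nat list \<Rightarrow> nat \<Rightarrow> nat" where
  "lab [] t = 0"
| "lab (s#L) t = (if t < s then 0 else Suc (lab L (t - s)))"

fun sz :: "nat list \<Rightarrow> nat \<Rightarrow> nat" where
  "sz [] t = 0"
| "sz (s#L) t = (if t < s then s else sz L (t - s))"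

lemma blocks_len: "length (blocks e j) = g_aux e j"
proof (induction e j rule: blocks.induct)
  case (1 e j)
  show ?case
  proof (cases "j < length e \<and> j + e!j + 1 < length e")
    case True
    have IH: "length (blocks e (j + e!j + 1)) = g_aux e (j + e!j + 1)" using 1 True by blast
    have eq: "blocks e j = (e!j+1) # blocks e (j + e!j + 1)" using True by (subst blocks.simps) auto
    show ?thesis unfolding eq using IH True g_aux_lt[of j e] by simp
  next
    case False
    then show ?thesis
      by (subst blocks.simps) (auto simp: g_aux_ge g_aux_lt[of j e])
  qed
qed

lemma blocks_sum: "sum_list (blocks e j) = length e - j"
proof (induction e j rule: blocks.induct)
  case (1 e j)
  show ?case
  proof (cases "j < length e \<and> j + e!j + 1 < length e")
    case True
    have IH: "sum_list (blocks e (j + e!j + 1)) = length e - (j + e!j + 1)" using 1 True by blast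
    have eq: "blocks e j = (e!j+1) # blocks e (j + e!j + 1)" using True by (subst blocks.simps) auto
    show ?thesis unfolding eq using IH True by (simp add: Suc_diff_Suc)
  next
    case False
    then show ?thesis
      by (subst blocks.simps) auto
  qed
qed

lemma blocks_pos: "x \<in> set (blocks e j) \<Longrightarrow> 0 < x"
proof (induction e j rule: blocks.induct)
  case (1 e j)
  show ?case using 1(2)
    by (subst (asm) blocks.simps) (auto split: if_splits intro: 1(1))
qed

lemma blocks_valid: "(\<forall>t<length e. f t = e!t) \<Longrightarrow> valid f j (blocks e j)"
proof (induction e j rule: blocks.induct)
  case (1 e j)
  show ?case using 1
    by (subst blocks.simps) auto
qed

lemma blocks_butlast: "sorted e \<Longrightarrow> sorted (butlast (blocks e j)) \<and> (\<forall>x\<in>set (butlast (blocks e j)). e!j + 1 \<le> x)"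
proof (induction e j rule: blocks.induct)
  case (1 e j)
  show ?case
  proof (cases "j < length e \<and> j + e!j + 1 < length e")
    case True
    let ?j = "j + e!j + 1"
    have IH: "sorted (butlast (blocks e ?j)) \<and> (\<forall>x\<in>set (butlast (blocks e ?j)). e!?j + 1 \<le> x)"
      using 1 True by auto
    have ne: "blocks e ?j \<noteq> []" using True by (subst blocks.simps) auto
    have le: "e!j \<le> e!?j" using 1(2) True by (simp add: sorted_nth_mono)
    have eq: "blocks e j = (e!j+1) # blocks e ?j" using True by (subst blocks.simps) auto
    show ?thesis unfolding eq using ne IH le by (auto simp: butlast.simps)
  next
    case False
    then have "butlast (blocks e j) = []" by (subst blocks.simps) auto
    then show ?thesis by simp
  qed
qed

lemma valid_snoc: "valid f a (xs @ [r]) \<Longrightarrow> valid f a xs \<and> r \<le> f (a + sum_list xs) + 1"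
proof (induction xs arbitrary: a)
  case (Cons x xs)
  then have "r \<le> f (a + x + sum_list xs) + 1" by auto
  then show ?case using Cons by (auto simp: add.assoc)
qed simp

lemma valid_mono: "mono f \<Longrightarrow> valid f a xs \<Longrightarrow> a \<le> b \<Longrightarrow> valid f b xs"
proof (induction xs arbitrary: a b)
  case (Cons x xs)
  then show ?case using monoD[OF Cons(2) Cons(4)] by auto
qed simp

lemma valid_insort: "mono f \<Longrightarrow> valid f a xs \<Longrightarrow> r \<le> f (a + sum_list xs) + 1 \<Longrightarrow> valid f a (insort r xs)"
proof (induction xs arbitrary: a)
  case Nil then show ?case by simp
next
  case (Cons x xs)
  show ?case
  proof (cases "r \<le> x")
    case True
    have "f a \<le> f (a + r)" using monoD[OF Cons(2)] by simp
    moreover have "valid f (a + r + x) xs"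
      using valid_mono[OF Cons(2)] Cons(3) by auto
    ultimately show ?thesis using True Cons(3) by auto
  next
    case False
    have "r \<le> f (a + x + sum_list xs) + 1" using Cons(4) by (simp add: add.assoc)
    then have "valid f (a + x) (insort r xs)" using Cons by auto
    then show ?thesis using False Cons(3) by auto
  qed
qed

lemma sum_insort: "sum_list (insort (x::nat) xs) = x + sum_list xs"
  by (induction xs) (auto simp: add.left_commute)

lemma lab_lt: "t < sum_list L \<Longrightarrow> lab L t < length L"
  by (induction L arbitrary: t) auto

lemma sz_in: "t < sum_list L \<Longrightarrow> sz L t \<in> set L"
  by (induction L arbitrary: t) auto

lemma lab_card: "t < sum_list L \<Longrightarrow> card {u. u < sum_list L \<and> lab L u = lab L t} = sz L t"
proof (induction L arbitrary: t)
  case Nil then show ?case by simp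
next
  case (Cons s L)
  show ?case
  proof (cases "t < s")
    case True
    have "{u. u < sum_list (s#L) \<and> lab (s#L) u = lab (s#L) t} = {..<s}"
      using True by auto
    then show ?thesis using True by simp
  next
    case False
    have "{u. u < sum_list (s#L) \<and> lab (s#L) u = lab (s#L) t}
        = (\<lambda>u. u + s) ` {u. u < sum_list L \<and> lab L u = lab L (t - s)}"
    proof (rule set_eqI, rule iffI)
      fix u assume "u \<in> {u. u < sum_list (s#L) \<and> lab (s#L) u = lab (s#L) t}"
      then have "u < s + sum_list L" "lab (s#L) u = Suc (lab L (t - s))" using False by auto
      then have "\<not> u < s" "lab L (u - s) = lab L (t - s)" by (auto split: if_splits)
      then show "u \<in> (\<lambda>u. u + s) ` {u. u < sum_list L \<and> lab L u = lab L (t - s)}"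
        using \<open>u < s + sum_list L\<close> by (intro image_eqI[of _ _ "u - s"]) auto
    next
      fix u assume "u \<in> (\<lambda>u. u + s) ` {u. u < sum_list L \<and> lab L u = lab L (t - s)}"
      then show "u \<in> {u. u < sum_list (s#L) \<and> lab (s#L) u = lab (s#L) t}" using False by auto
    qed
    moreover have "card ((\<lambda>u. u + s) ` {u. u < sum_list L \<and> lab L u = lab L (t - s)})
        = card {u. u < sum_list L \<and> lab L u = lab L (t - s)}"
      by (rule card_image) (auto simp: inj_on_def)
    moreover have "t - s < sum_list L" using Cons(2) False by auto
    ultimately show ?thesis using Cons.IH False by simp
  qed
qed

lemma sz_valid: "valid f a L \<Longrightarrow> mono f \<Longrightarrow> t < sum_list L \<Longrightarrow> sz L t \<le> f (a + t) + 1"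
proof (induction L arbitrary: a t)
  case Nil then show ?case by simp
next
  case (Cons s L)
  show ?case
  proof (cases "t < s")
    case True
    then show ?thesis using Cons(2) monoD[OF Cons(3), of a "a+t"] by auto
  next
    case False
    then have "sz L (t - s) \<le> f (a + s + (t - s)) + 1"
      using Cons.IH[of "a+s" "t-s"] Cons(2,3,4) by auto
    then show ?thesis using False by auto
  qed
qed

lemma sz_mono: "sorted L \<Longrightarrow> t \<le> t' \<Longrightarrow> t' < sum_list L \<Longrightarrow> sz L t \<le> sz L t'"
proof (induction L arbitrary: t t')
  case Nil then show ?case by simp
next
  case (Cons s L)
  show ?case
  proof (cases "t < s")
    case True
    show ?thesis
    proof (cases "t' < s")
      case False
      then have "sz L (t' - s) \<in> set L" using Cons(4) by (intro sz_in) auto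
      then show ?thesis using True False Cons(2) by auto
    qed (use True in auto)
  next
    case False
    then show ?thesis using Cons by auto
  qed
qed

lemma lab_surj: "i < length L \<Longrightarrow> \<forall>x\<in>set L. 0 < x \<Longrightarrow> \<exists>t<sum_list L. lab L t = i"
proof (induction L arbitrary: i)
  case Nil then show ?case by simp
next
  case (Cons s L)
  show ?case
  proof (cases i)
    case 0 then show ?thesis using Cons(3) by (intro exI[of _ 0]) auto
  next
    case (Suc i')
    then obtain t where "t < sum_list L" "lab L t = i'" using Cons by auto
    then show ?thesis using Suc by (intro exI[of _ "t + s"]) auto
  qed
qed



lemma clique_fin: "finite {card K | K. K \<subseteq> {0..<n} \<and> is_clique E K}"
proof (rule finite_subset[of _ "{0..n}"])
  show "{card K | K. K \<subseteq> {0..<n} \<and> is_clique E K} \<subseteq> {0..n}"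
  proof
    fix x assume "x \<in> {card K | K. K \<subseteq> {0..<n} \<and> is_clique E K}"
    then obtain K where "x = card K" "K \<subseteq> {0..<n}" by auto
    then show "x \<in> {0..n}" using card_mono[of "{0..<n}" K] by auto
  qed
qed simp

lemma clique_le: "K \<subseteq> {0..<n} \<Longrightarrow> is_clique E K \<Longrightarrow> card K \<le> clique_number n E"
  unfolding clique_number_def by (rule Max_ge[OF clique_fin]) auto

lemma clique_ub: "(\<And>K. K \<subseteq> {0..<n} \<Longrightarrow> is_clique E K \<Longrightarrow> card K \<le> m) \<Longrightarrow> clique_number n E \<le> m"
  unfolding clique_number_def
  by (subst Max_le_iff[OF clique_fin]) (auto intro!: exI[of _ "{}"] simp: is_clique_def)

lemma colour_clique: "proper_colouring n E k c \<Longrightarrow> K \<subseteq> {0..<n} \<Longrightarrow> is_clique E K \<Longrightarrow> card K \<le> k"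
proof -
  assume pc: "proper_colouring n E k c" and K: "K \<subseteq> {0..<n}" "is_clique E K"
  have "inj_on c K"
    using pc K unfolding inj_on_def proper_colouring_def is_clique_def by (meson atLeastLessThan_iff subsetD)
  then have "card K = card (c ` K)" by (simp add: card_image)
  also have "\<dots> \<le> card {0..<k}"
    using pc K by (intro card_mono) (auto simp: proper_colouring_def)
  finally show ?thesis by simp
qed

lemma chrom_ge: "proper_colouring n E m c \<Longrightarrow> clique_number n E \<le> chromatic_number n E"
proof -
  assume "proper_colouring n E m c"
  then have "\<exists>k c. proper_colouring n E k c" by blast
  then have "\<exists>c. proper_colouring n E (chromatic_number n E) c"
    unfolding chromatic_number_def by (rule LeastI_ex[of "\<lambda>k. \<exists>c. proper_colouring n E k c"])
  then obtain c where "proper_colouring n E (chromatic_number n E) c" by blast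
  then show ?thesis by (intro clique_ub) (rule colour_clique)
qed

lemma chrom_le: "proper_colouring n E k c \<Longrightarrow> chromatic_number n E \<le> k"
  unfolding chromatic_number_def by (rule Least_le) blast

lemma real_colouring: "realization pi E \<Longrightarrow> proper_colouring (length pi) E (length pi) id"
  unfolding realization_def simple_graph_def proper_colouring_def by auto

lemma multipartite_numbers:
  assumes "complete_multipartite n E k"
  shows "clique_number n E = k \<and> chromatic_number n E = k"
proof -
  obtain p where p1: "\<forall>v<n. p v < k" and p2: "\<forall>i<k. \<exists>v<n. p v = i"
    and p3: "\<forall>u v. E u v \<longleftrightarrow> u < n \<and> v < n \<and> p u \<noteq> p v"
    using assms unfolding complete_multipartite_def by blast
  define r where "r i = (SOME v. v < n \<and> p v = i)" for i
  have r: "r i < n \<and> p (r i) = i" if "i < k" for i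
    unfolding r_def using p2 that by (metis (mono_tags, lifting) someI_ex)
  have inj: "inj_on r {0..<k}" using r unfolding inj_on_def by (metis atLeastLessThan_iff)
  have "card (r ` {0..<k}) = k" using inj by (simp add: card_image)
  moreover have "r ` {0..<k} \<subseteq> {0..<n}" using r by auto
  moreover have "is_clique E (r ` {0..<k})" unfolding is_clique_def using r p3 by auto
  ultimately have k1: "k \<le> clique_number n E" by (metis clique_le)
  have pc: "proper_colouring n E k p" using p1 p3 unfolding proper_colouring_def by auto
  have k2: "chromatic_number n E \<le> k" by (rule chrom_le[OF pc])
  have k3: "clique_number n E \<le> chromatic_number n E" by (rule chrom_ge[OF pc])
  show ?thesis using k1 k2 k3 by simp
qed

lemma compl_nth: "t < length pi \<Longrightarrow> compl_seq pi ! t = (length pi - 1) - pi ! (length pi - 1 - t)"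
  unfolding compl_seq_def by (simp add: rev_nth)

lemma compl_sorted: "sorted pi \<Longrightarrow> sorted (compl_seq pi)"
proof -
  assume S: "sorted pi"
  have l: "length (compl_seq pi) = length pi" by (simp add: compl_seq_def)
  show ?thesis unfolding sorted_iff_nth_mono l
  proof (intro allI impI)
    fix i j assume "i \<le> j" "j < length pi"
    then show "compl_seq pi ! i \<le> compl_seq pi ! j"
      using S by (auto simp: compl_nth intro!: diff_le_mono2 sorted_nth_mono)
  qed
qed

lemma deg_le: "realization pi E \<Longrightarrow> v < length pi \<Longrightarrow> pi ! v \<le> length pi - 1"
proof -
  assume R: "realization pi E" and v: "v < length pi"
  let ?n = "length pi"
  have "pi ! v = card {u. u < ?n \<and> E v u}" using R v unfolding realization_def deg_def by auto
  also have "\<dots> \<le> card ({0..<?n} - {v})"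
    using R unfolding realization_def simple_graph_def by (intro card_mono) auto
  also have "\<dots> = ?n - 1" using v by simp
  finally show ?thesis .
qed

lemma g_mono:
  assumes "length e' = length e" "\<forall>i<length e. e'!i \<le> e!i" "sorted e'"
  shows "j \<le> j' \<Longrightarrow> g_aux e j' \<le> g_aux e' j"
proof (induction "length e - j'" arbitrary: j j' rule: less_induct)
  case less
  show ?case
  proof (cases "j' < length e")
    case False then show ?thesis by (simp add: g_aux_ge)
  next
    case True
    have "e'!j \<le> e'!j'" using assms True less(2) by (simp add: sorted_nth_mono)
    also have "\<dots> \<le> e!j'" using assms True by simp
    finally have le: "j + e'!j + 1 \<le> j' + e!j' + 1" using less(2) by simp
    have "g_aux e (j' + e!j' + 1) \<le> g_aux e' (j + e'!j + 1)"
      using less(1)[OF _ le] True by simp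
    then show ?thesis using True less(2) assms(1) by (simp add: g_aux_lt)
  qed
qed

lemma clique_greedy:
  assumes R: "realization pi E" and S: "sorted pi" and e: "e = compl_seq pi"
  shows "S \<subseteq> {0..<length pi} \<Longrightarrow> length pi - j \<le> card S \<Longrightarrow>
     \<exists>K \<subseteq> S. is_clique E K \<and> g_aux e j \<le> card K"
proof (induction "length pi - j" arbitrary: j S rule: less_induct)
  case less
  let ?n = "length pi"
  have le: "length e = ?n" using e by (simp add: compl_seq_def)
  show ?case
  proof (cases "j < ?n")
    case False then show ?thesis using le by (intro exI[of _ "{}"]) (auto simp: g_aux_ge is_clique_def)
  next
    case True
    have "\<exists>i\<in>S. ?n - 1 - j \<le> i"
    proof (rule ccontr)
      assume "\<not> ?thesis"
      then have "S \<inter> {?n - 1 - j..<?n} = {}" by auto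
      then have "card (S \<union> {?n - 1 - j..<?n}) = card S + card {?n - 1 - j..<?n}"
        using less(2) by (intro card_Un_disjoint) (auto intro: finite_subset)
      moreover have "card (S \<union> {?n - 1 - j..<?n}) \<le> card {0..<?n}"
        using less(2) by (intro card_mono) auto
      ultimately show False using True less(3) by simp
    qed
    then obtain i where i: "i \<in> S" "?n - 1 - j \<le> i" by blast
    have iN: "i < ?n" using i less(2) by auto
    have sg: "simple_graph ?n E" using R by (simp add: realization_def)
    define NN where "NN = {u. u < ?n \<and> u \<noteq> i \<and> \<not> E i u}"
    have "{0..<?n} - {i} = {u. u < ?n \<and> E i u} \<union> NN"
      using sg unfolding NN_def simple_graph_def by auto
    moreover have "{u. u < ?n \<and> E i u} \<inter> NN = {}" unfolding NN_def by auto
    ultimately have "card ({0..<?n} - {i}) = card {u. u < ?n \<and> E i u} + card NN"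
      by (metis card_Un_disjoint finite_Un finite_atLeastLessThan finite_Diff)
    moreover have "card {u. u < ?n \<and> E i u} = pi ! i"
      using R iN unfolding realization_def deg_def by auto
    ultimately have cNN: "card NN = ?n - 1 - pi ! i" using iN by simp
    have "pi ! (?n - 1 - j) \<le> pi ! i" using S i iN by (simp add: sorted_nth_mono)
    then have cNN2: "card NN \<le> e ! j" using cNN e True by (simp add: compl_nth)
    define S' where "S' = {u \<in> S. E i u}"
    have "S \<subseteq> insert i (S' \<union> NN)" using less(2) unfolding S'_def NN_def by auto
    then have "card S \<le> card (insert i (S' \<union> NN))"
    proof (intro card_mono)
      have "finite S'" unfolding S'_def using less(2) finite_subset by fastforce
      moreover have "finite NN" unfolding NN_def by simp
      ultimately show "finite (insert i (S' \<union> NN))" by simp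
    qed simp
    also have "\<dots> \<le> Suc (card (S' \<union> NN))"
      by (cases "finite (S' \<union> NN)") (auto simp: card_insert_if)
    also have "\<dots> \<le> Suc (card S' + card NN)"
      using card_Un_le[of S' NN] by simp
    finally have cS': "?n - (j + e!j + 1) \<le> card S'" using less(3) cNN2 by linarith
    have sub: "S' \<subseteq> {0..<?n}" using less(2) unfolding S'_def by auto
    obtain K' where K': "K' \<subseteq> S'" "is_clique E K'" "g_aux e (j + e!j + 1) \<le> card K'"
    proof -
      have "length pi - (j + e!j + 1) < length pi - j" using True by simp
      then show ?thesis using less(1)[OF _ sub cS'] that by blast
    qed
    have iK: "i \<notin> K'" using K'(1) sg unfolding S'_def simple_graph_def by auto
    have fK: "finite K'" using K'(1) sub by (meson finite_atLeastLessThan finite_subset)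
    have "is_clique E (insert i K')"
      using K' sg unfolding is_clique_def S'_def simple_graph_def by blast
    moreover have "insert i K' \<subseteq> S" using K'(1) i unfolding S'_def by auto
    moreover have "g_aux e j \<le> card (insert i K')"
      using K'(3) iK fK True le by (simp add: g_aux_lt)
    ultimately show ?thesis by blast
  qed
qed



lemma construct:
  assumes G: "graphical pi"
  shows "\<exists>pi' E. graphical pi' \<and> length pi' = length pi \<and> list_all2 (\<le>) pi pi'
            \<and> realization pi' E \<and> complete_multipartite (length pi) E (h pi)"
proof -
  let ?n = "length pi"
  define e where "e = compl_seq pi"
  define k where "k = h pi"
  have S: "sorted pi" using G by (simp add: graphical_def)
  obtain E0 where R0: "realization pi E0" using G by (auto simp: graphical_def)
  have le: "length e = ?n" by (simp add: e_def compl_seq_def)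
  have se: "sorted e" unfolding e_def using S by (rule compl_sorted)
  define f where "f t = e ! (min t (?n - 1))" for t
  have mf: "mono f"
  proof (rule monoI)
    fix a b :: nat assume "a \<le> b"
    show "f a \<le> f b"
    proof (cases "?n = 0")
      case True then show ?thesis by (simp add: f_def)
    next
      case False
      then obtain m where m: "?n = Suc m" by (cases ?n) auto
      show ?thesis unfolding f_def m using se le \<open>a \<le> b\<close> m
        by (intro sorted_nth_mono) (auto simp: min_def)
    qed
  qed
  have fe: "\<forall>t<length e. f t = e!t" unfolding f_def using le by auto
  define B where "B = blocks e 0"
  have Blen: "length B = k" unfolding B_def k_def h_def g_def by (simp add: blocks_len e_def)
  have Bsum: "sum_list B = ?n" unfolding B_def by (simp add: blocks_sum le)
  have Bpos: "\<forall>x\<in>set B. 0 < x" unfolding B_def using blocks_pos by blast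
  have Bval: "valid f 0 B" unfolding B_def by (rule blocks_valid[OF fe])
  have Bbl: "sorted (butlast B)" unfolding B_def using blocks_butlast[OF se] by blast
  define L where "L = (if B = [] then [] else insort (last B) (butlast B))"
  have L: "length L = k \<and> sum_list L = ?n \<and> (\<forall>x\<in>set L. 0 < x) \<and> sorted L \<and> valid f 0 L"
  proof (cases "B = []")
    case True then show ?thesis using Blen Bsum by (simp add: L_def)
  next
    case False
    have Beq: "B = butlast B @ [last B]" using False by simp
    have v: "valid f 0 (butlast B) \<and> last B \<le> f (0 + sum_list (butlast B)) + 1"
      using Bval Beq by (metis valid_snoc)
    have "length L = length B" using False by (subst Beq) (simp add: L_def length_insort)
    moreover have sB: "sum_list B = last B + sum_list (butlast B)"
      using arg_cong[OF Beq, of sum_list] by simp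
    moreover have stB: "set B = insert (last B) (set (butlast B))"
      using arg_cong[OF Beq, of set] by simp
    have "sum_list L = sum_list B" using False sB
      by (simp add: L_def sum_insort)
    moreover have "set L = set B" using False stB
      by (simp add: L_def set_insort_key)
    moreover have "sorted L" using Bbl False by (simp add: L_def sorted_insort)
    moreover have "valid f 0 L" using False v mf by (simp add: L_def valid_insort)
    ultimately show ?thesis using Blen Bsum Bpos by simp
  qed
  define p where "p v = lab L (?n - 1 - v)" for v
  define E where "E u v = (u < ?n \<and> v < ?n \<and> p u \<noteq> p v)" for u v
  define pi' where "pi' = map (\<lambda>v. ?n - sz L (?n - 1 - v)) [0..<?n]"
  have lpi': "length pi' = ?n" by (simp add: pi'_def)
  have pi'nth: "pi' ! v = ?n - sz L (?n - 1 - v)" if "v < ?n" for v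
    using that by (simp add: pi'_def)
  have card_same: "card {u. u < ?n \<and> p u = p v} = sz L (?n - 1 - v)" if v: "v < ?n" for v
  proof -
    have "{u. u < ?n \<and> p u = p v} = (\<lambda>t. ?n - 1 - t) ` {t. t < sum_list L \<and> lab L t = lab L (?n - 1 - v)}"
    proof (rule set_eqI, rule iffI)
      fix u assume "u \<in> {u. u < ?n \<and> p u = p v}"
      then show "u \<in> (\<lambda>t. ?n - 1 - t) ` {t. t < sum_list L \<and> lab L t = lab L (?n - 1 - v)}"
        using L by (intro image_eqI[of _ _ "?n - 1 - u"]) (auto simp: p_def)
    next
      fix u assume "u \<in> (\<lambda>t. ?n - 1 - t) ` {t. t < sum_list L \<and> lab L t = lab L (?n - 1 - v)}"
      then obtain t where "t < ?n" "lab L t = lab L (?n - 1 - v)" "u = ?n - 1 - t" using L by auto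
      then show "u \<in> {u. u < ?n \<and> p u = p v}" by (auto simp: p_def)
    qed
    moreover have "inj_on (\<lambda>t. ?n - 1 - t) {t. t < sum_list L \<and> lab L t = lab L (?n - 1 - v)}"
      using L by (auto simp: inj_on_def)
    ultimately have "card {u. u < ?n \<and> p u = p v} = card {t. t < sum_list L \<and> lab L t = lab L (?n - 1 - v)}"
      by (simp add: card_image)
    also have "\<dots> = sz L (?n - 1 - v)" using L v by (intro lab_card) auto
    finally show ?thesis .
  qed
  have degE: "deg ?n E v = pi' ! v" if v: "v < ?n" for v
  proof -
    have "{u. u < ?n \<and> E v u} = {0..<?n} - {u. u < ?n \<and> p u = p v}"
      using v by (auto simp: E_def)
    then have "deg ?n E v = card {0..<?n} - card {u. u < ?n \<and> p u = p v}"
      unfolding deg_def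
    proof (simp only:)
      show "card ({0..<?n} - {u. u < ?n \<and> p u = p v}) = card {0..<?n} - card {u. u < ?n \<and> p u = p v}"
        by (rule card_Diff_subset) auto
    qed
    then show ?thesis using card_same[OF v] pi'nth[OF v] by simp
  qed
  have real: "realization pi' E"
    unfolding realization_def simple_graph_def lpi' using degE by (auto simp: E_def)
  have sorted': "sorted pi'"
    unfolding sorted_iff_nth_mono lpi'
  proof (intro allI impI)
    fix i j assume ij: "i \<le> j" "j < ?n"
    have "sz L (?n - 1 - j) \<le> sz L (?n - 1 - i)" using L ij by (intro sz_mono) auto
    then show "pi' ! i \<le> pi' ! j" using pi'nth ij by simp
  qed
  have dom: "list_all2 (\<le>) pi pi'"
    unfolding list_all2_conv_all_nth lpi'
  proof (intro conjI allI impI refl)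
    fix v assume v: "v < ?n"
    have t: "?n - 1 - v < ?n" using v by simp
    have "sz L (?n - 1 - v) \<le> f (0 + (?n - 1 - v)) + 1" using L mf t by (intro sz_valid) auto
    also have "f (0 + (?n - 1 - v)) = e ! (?n - 1 - v)" using fe le t by simp
    also have "\<dots> = (?n - 1) - pi ! v" using t v unfolding e_def by (simp add: compl_nth)
    finally have "sz L (?n - 1 - v) \<le> ?n - 1 - pi ! v + 1" .
    moreover have "pi ! v \<le> ?n - 1" using deg_le[OF R0 v] .
    ultimately show "pi ! v \<le> pi' ! v" using pi'nth[OF v] v by simp
  qed
  have cm: "complete_multipartite ?n E k"
    unfolding complete_multipartite_def
  proof (intro exI[of _ p] conjI allI impI)
    fix v assume "v < ?n"
    then show "p v < k" using L lab_lt[of "?n - 1 - v" L] by (auto simp: p_def)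
  next
    fix i assume "i < k"
    then obtain t where "t < ?n" "lab L t = i" using L lab_surj[of i L] by auto
    then show "\<exists>v<?n. p v = i" by (intro exI[of _ "?n - 1 - t"]) (auto simp: p_def)
  next
    fix u v show "E u v = (u < ?n \<and> v < ?n \<and> p u \<noteq> p v)" by (simp add: E_def)
  qed
  have "graphical pi'" unfolding graphical_def using real sorted' by blast
  then show ?thesis using real dom cm lpi' unfolding k_def by blast
qed

lemma p1: assumes "graphical pi" "realization pi E"
  shows "chromatic_number (length pi) E \<ge> clique_number (length pi) E \<and>
            clique_number (length pi) E \<ge> h pi"
proof
  have S: "sorted pi" using assms by (simp add: graphical_def)
  note R = assms(2)
  show "chromatic_number (length pi) E \<ge> clique_number (length pi) E"
    by (rule chrom_ge[OF real_colouring[OF R]])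
  obtain K where "K \<subseteq> {0..<length pi}" "is_clique E K" "g_aux (compl_seq pi) 0 \<le> card K"
    using clique_greedy[OF R S refl, of "{0..<length pi}" 0] by force
  then show "clique_number (length pi) E \<ge> h pi"
    unfolding h_def g_def using clique_le[of K "length pi" E] by linarith
qed

lemma p2: assumes "graphical pi" "graphical pi'" "length pi' = length pi" "list_all2 (\<le>) pi pi'"
  shows "h pi \<le> h pi'"
proof -
  let ?e = "compl_seq pi" and ?e' = "compl_seq pi'"
  have l: "length ?e' = length ?e" using assms by (simp add: compl_seq_def)
  have s': "sorted ?e'" using assms by (intro compl_sorted) (simp add: graphical_def)
  have "\<forall>i<length ?e. ?e'!i \<le> ?e!i"
  proof (intro allI impI)
    fix i assume i: "i < length ?e"
    then have i': "i < length pi" by (simp add: compl_seq_def)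
    have "pi ! (length pi - 1 - i) \<le> pi' ! (length pi - 1 - i)"
      using assms i' by (auto simp: list_all2_conv_all_nth)
    then show "?e'!i \<le> ?e!i" using assms i' by (simp add: compl_nth)
  qed
  then have "g_aux ?e 0 \<le> g_aux ?e' 0" using g_mono[OF l _ s', of 0 0] by blast
  then show "h pi \<le> h pi'" unfolding h_def g_def .
qed

lemma p3: assumes "graphical pi"
  shows "\<exists>pi' E. graphical pi' \<and> length pi' = length pi \<and> list_all2 (\<le>) pi pi'
            \<and> realization pi' E \<and> complete_multipartite (length pi) E (h pi)
            \<and> clique_number (length pi) E = h pi
            \<and> chromatic_number (length pi) E = h pi"
proof -
  obtain pi' E where P: "graphical pi' \<and> length pi' = length pi \<and> list_all2 (\<le>) pi pi'
            \<and> realization pi' E \<and> complete_multipartite (length pi) E (h pi)"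
    using construct[OF assms] by blast
  have "clique_number (length pi) E = h pi \<and> chromatic_number (length pi) E = h pi"
    using P multipartite_numbers[of "length pi" E "h pi"] by blast
  then show ?thesis using P by blast
qed

theorem mainTheorem9:
  fixes pi :: "nat list"
  assumes "graphical pi"
  shows "(\<forall>E. realization pi E \<longrightarrow>
            chromatic_number (length pi) E \<ge> clique_number (length pi) E \<and>
            clique_number (length pi) E \<ge> h pi)
       \<and> (\<forall>pi'. graphical pi' \<and> length pi' = length pi \<and> list_all2 (\<le>) pi pi'
            \<longrightarrow> h pi \<le> h pi')
       \<and> (\<exists>pi' E. graphical pi' \<and> length pi' = length pi \<and> list_all2 (\<le>) pi pi'
            \<and> realization pi' E \<and> complete_multipartite (length pi) E (h pi)
            \<and> clique_number (length pi) E = h pi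
            \<and> chromatic_number (length pi) E = h pi)"
proof (intro conjI)
  show "\<forall>E. realization pi E \<longrightarrow>
            chromatic_number (length pi) E \<ge> clique_number (length pi) E \<and>
            clique_number (length pi) E \<ge> h pi"
    using p1[OF assms] by blast
  show "\<forall>pi'. graphical pi' \<and> length pi' = length pi \<and> list_all2 (\<le>) pi pi'
            \<longrightarrow> h pi \<le> h pi'"
    using p2[OF assms] by blast
  show "\<exists>pi' E. graphical pi' \<and> length pi' = length pi \<and> list_all2 (\<le>) pi pi'
            \<and> realization pi' E \<and> complete_multipartite (length pi) E (h pi)
            \<and> clique_number (length pi) E = h pi
            \<and> chromatic_number (length pi) E = h pi"
    by (rule p3[OF assms])
qed

end
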